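(* Suppose that $\|\tilde{\mu}_{m}-\mu\|_\infty=\mathcal{O}_{\mathrm{P}}(a_m)$ and $\|\tilde{\pi}_{m}-\pi\|_\infty=\mathcal{O}_{\mathrm{P}}(a_m)$ for sufficiently large $m$, where $\{a_m\}$ is a deterministic sequence with $a_m\to 0$. Suppose in addition that, for sufficiently large $m$ and conditionally on the fitted function $\tilde{\mu}_{m}(\cdot)$, the joint density $b_m(x,u)$ of $(\mu(Z),\eta_m(Z))$, where $\eta_m=a_m^{-1}(\tilde{\mu}_{m}-\mu)$, and its partial derivatives $\partial_x b_m(x,u)$, $\partial_x^2 b_m(x,u)$ exist for all $x,u$ and there are non-negative functions $\bar b_{m,i}(u)$, $i=0,1,2$, with $b_m(x,u)\le \bar b_{m,0}(u)$, $|\partial_x b_m(x,u)|\le \bar b_{m,1}(u)$, $|\partial_x^2 b_m(x,u)|\le \bar b_{m,2}(u)$ for all $x,u$ and $\sup_m\int_{\mathbb{R}}|u|^r\bar b_{m,i}(u)\,du<\infty$ for $r=0,1,2,3$ and $i=0,1,2$. Suppose also that $f_\mu(q)>0$. Then $\tilde{q}_{m}-q=\mathcal{O}_{\mathrm{P}}(a_m)$.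
   Context: $Z$ denotes the risk factors, $\mu(z)=\mathrm{E}[X\mid Z=z]$ and $\pi(z)=\mathrm{E}[Y\mid Z=z]$ are portfolio loss functions, and $\tilde{\mu}_{m},\tilde{\pi}_{m}$ are approximations of them fitted in a first stage from $m$ outer-level scenarios (each with inner-level observations). $\|\cdot\|_\infty$ is the essential supremum norm over the domain of $Z$ w.r.t. its distribution. $q$ is the $\alpha$-VaR of $\mu(Z)$, i.e. $\Pr\{\mu(Z)\le q\}=\alpha$, and $\tilde{q}_{m}$ is the $\alpha$-VaR of $\tilde{\mu}_{m}(Z)$ conditionally on the fitted functions, i.e. $\mathrm{Pr}_m\{\tilde{\mu}_{m}(Z)\le \tilde{q}_{m}\}=\alpha$, where $\mathrm{Pr}_m$ is probability conditional on $\tilde{\mu}_{m},\tilde{\pi}_{m}$. $f_\mu$ is the density of $\mu(Z)$. *)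

theory Defs
  imports "HOL-Probability.Probability"
begin

definition sup_norm :: "'z measure \<Rightarrow> ('z \<Rightarrow> real) \<Rightarrow> ereal" where
  "sup_norm PZ f = esssup PZ (\<lambda>z. ereal \<bar>f z\<bar>)"

text \<open>Stochastic boundedness X_m = O_P(a_m) on the first-stage probability space M
  (outer probability, so no measurability of the events is presupposed).\<close>
definition bigOP :: "'o measure \<Rightarrow> (nat \<Rightarrow> 'o \<Rightarrow> ereal) \<Rightarrow> (nat \<Rightarrow> real) \<Rightarrow> bool" where
  "bigOP M X a \<longleftrightarrow>
     (\<forall>\<epsilon>>0. \<exists>K N. \<forall>m\<ge>N. \<exists>A\<in>sets M.
        {\<omega>\<in>space M. X m \<omega> > ereal (K * a m)} \<subseteq> A \<and> measure M A < \<epsilon>)"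

definition VaR :: "'z measure \<Rightarrow> real \<Rightarrow> ('z \<Rightarrow> real) \<Rightarrow> real" where
  "VaR P \<alpha> X = Inf {x. measure P {z\<in>space P. X z \<le> x} \<ge> \<alpha>}"

end

theory Submission
  imports Defs "HOL-Probability.Distribution_Functions"
begin

lemma (in prob_space) quant_set:
  fixes X :: "'a \<Rightarrow> real"
  assumes X: "X \<in> borel_measurable M" and a: "0 < \<alpha>" "\<alpha> < 1"
  shows "{x. measure M {z\<in>space M. X z \<le> x} \<ge> \<alpha>} \<noteq> {}"
    and "bdd_below {x. measure M {z\<in>space M. X z \<le> x} \<ge> \<alpha>}"
proof -
  let ?D = "distr M borel X"
  interpret D: real_distribution ?D using X by simp
  have cdfeq: "cdf ?D x = measure M {z\<in>space M. X z \<le> x}" for x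
    unfolding cdf_def2 using X
    by (subst measure_distr) (auto intro!: arg_cong[where f="measure M"])
  have "eventually (\<lambda>x. cdf ?D x > \<alpha>) at_top"
    using D.cdf_lim_at_top_prob a by (intro order_tendstoD) auto
  then obtain x where "cdf ?D x > \<alpha>" by (metis eventually_at_top_linorder order_refl)
  then show "{x. measure M {z\<in>space M. X z \<le> x} \<ge> \<alpha>} \<noteq> {}"
    using cdfeq by (metis (mono_tags, lifting) empty_iff less_imp_le mem_Collect_eq)
  have "eventually (\<lambda>x. cdf ?D x < \<alpha>) at_bot"
    using D.cdf_lim_at_bot a by (intro order_tendstoD) auto
  then obtain L where L: "\<And>x. x \<le> L \<Longrightarrow> cdf ?D x < \<alpha>" by (auto simp: eventually_at_bot_linorder)
  show "bdd_below {x. measure M {z\<in>space M. X z \<le> x} \<ge> \<alpha>}"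
    unfolding bdd_below_def
  proof (intro exI ballI)
    fix s assume "s \<in> {x. measure M {z\<in>space M. X z \<le> x} \<ge> \<alpha>}"
    then show "L \<le> s" using L[of s] cdfeq[of s] by force
  qed
qed

lemma (in prob_space) quant_shift:
  fixes X Y :: "'a \<Rightarrow> real"
  assumes X: "X \<in> borel_measurable M" and Y: "Y \<in> borel_measurable M"
    and a: "0 < \<alpha>" "\<alpha> < 1"
    and ae: "AE z in M. X z \<le> Y z + c"
  shows "VaR M \<alpha> X \<le> VaR M \<alpha> Y + c"
proof -
  let ?SX = "{x. measure M {z\<in>space M. X z \<le> x} \<ge> \<alpha>}"
  let ?SY = "{x. measure M {z\<in>space M. Y z \<le> x} \<ge> \<alpha>}"
  have bX: "bdd_below ?SX" and nY: "?SY \<noteq> {}" using quant_set X Y a by auto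
  have "Inf ?SX - c \<le> Inf ?SY"
  proof (rule cInf_greatest[OF nY])
    fix y assume y: "y \<in> ?SY"
    have "measure M {z\<in>space M. Y z \<le> y} \<le> measure M {z\<in>space M. X z \<le> y + c}"
      apply (rule finite_measure_mono_AE)
      using ae apply (auto elim!: AE_mp)[1]
      using X by measurable
    with y have "y + c \<in> ?SX" by auto
    then have "Inf ?SX \<le> y + c" by (rule cInf_lower[OF _ bX])
    then show "Inf ?SX - c \<le> y" by simp
  qed
  then show ?thesis unfolding VaR_def by simp
qed

theorem proposition2:
  fixes M :: "'o measure" and PZ :: "'z measure"
    and \<mu> \<pi> :: "'z \<Rightarrow> real"
    and \<mu>t \<pi>t :: "nat \<Rightarrow> 'o \<Rightarrow> 'z \<Rightarrow> real"
    and a :: "nat \<Rightarrow> real" and \<alpha> :: real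
    and b b1 b2 :: "nat \<Rightarrow> 'o \<Rightarrow> real \<Rightarrow> real \<Rightarrow> real"
    and bbar :: "nat \<Rightarrow> nat \<Rightarrow> real \<Rightarrow> real"
    and f\<mu> :: "real \<Rightarrow> real"
  assumes M: "prob_space M" and PZ: "prob_space PZ"
    and \<alpha>: "0 < \<alpha>" "\<alpha> < 1"
    and \<mu>_meas: "\<mu> \<in> borel_measurable PZ" and \<pi>_meas: "\<pi> \<in> borel_measurable PZ"
    and a_pos: "\<forall>m. 0 < a m" and a_lim: "a \<longlonglongrightarrow> 0"
    and rate_\<mu>: "bigOP M (\<lambda>m \<omega>. sup_norm PZ (\<lambda>z. \<mu>t m \<omega> z - \<mu> z)) a"
    and rate_\<pi>: "bigOP M (\<lambda>m \<omega>. sup_norm PZ (\<lambda>z. \<pi>t m \<omega> z - \<pi> z)) a"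
    and dens: "\<exists>N. \<forall>m\<ge>N. \<forall>\<omega>\<in>space M.
        distributed PZ (lborel \<Otimes>\<^sub>M lborel)
          (\<lambda>z. (\<mu> z, (\<mu>t m \<omega> z - \<mu> z) / a m))
          (\<lambda>(x, u). ennreal (b m \<omega> x u))
      \<and> (\<forall>x u. 0 \<le> b m \<omega> x u)
      \<and> (\<forall>x u. ((\<lambda>x. b m \<omega> x u) has_real_derivative b1 m \<omega> x u) (at x))
      \<and> (\<forall>x u. ((\<lambda>x. b1 m \<omega> x u) has_real_derivative b2 m \<omega> x u) (at x))
      \<and> (\<forall>x u. b m \<omega> x u \<le> bbar m 0 u)
      \<and> (\<forall>x u. \<bar>b1 m \<omega> x u\<bar> \<le> bbar m 1 u)
      \<and> (\<forall>x u. \<bar>b2 m \<omega> x u\<bar> \<le> bbar m 2 u)"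
    and bbar_nonneg: "\<exists>N. \<forall>m\<ge>N. \<forall>i\<le>2. \<forall>u. 0 \<le> bbar m i u"
    and bbar_int: "\<exists>N C. \<forall>m\<ge>N. \<forall>i\<le>2. \<forall>r\<le>(3::nat).
        (\<integral>\<^sup>+ u. ennreal (\<bar>u\<bar> ^ r * bbar m i u) \<partial>lborel) \<le> ennreal C"
    and f\<mu>_dens: "distributed PZ lborel \<mu> (\<lambda>x. ennreal (f\<mu> x))"
    and f\<mu>_cont: "continuous_on UNIV f\<mu>"
    and f\<mu>_pos: "f\<mu> (VaR PZ \<alpha> \<mu>) > 0"
  shows "bigOP M (\<lambda>m \<omega>. ereal \<bar>VaR PZ \<alpha> (\<mu>t m \<omega>) - VaR PZ \<alpha> \<mu>\<bar>) a"
proof -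
  interpret P: prob_space PZ by (rule PZ)
  obtain N0 where N0: "\<And>m \<omega>. m \<ge> N0 \<Longrightarrow> \<omega> \<in> space M \<Longrightarrow> distributed PZ (lborel \<Otimes>\<^sub>M lborel)
          (\<lambda>z. (\<mu> z, (\<mu>t m \<omega> z - \<mu> z) / a m))
          (\<lambda>(x, u). ennreal (b m \<omega> x u))"
    using dens by blast
  have meas: "\<mu>t m \<omega> \<in> borel_measurable PZ" if "m \<ge> N0" "\<omega> \<in> space M" for m \<omega>
  proof -
    have f: "(\<lambda>z. (\<mu> z, (\<mu>t m \<omega> z - \<mu> z) / a m)) \<in> PZ \<rightarrow>\<^sub>M lborel \<Otimes>\<^sub>M lborel"
      using distributed_measurable[OF N0[OF that]] .
    have "(\<lambda>z. snd (\<mu> z, (\<mu>t m \<omega> z - \<mu> z) / a m)) \<in> PZ \<rightarrow>\<^sub>M lborel"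
      by (rule measurable_compose[OF f measurable_snd])
    then have g: "(\<lambda>z. (\<mu>t m \<omega> z - \<mu> z) / a m) \<in> borel_measurable PZ" by simp
    have "(\<lambda>z. \<mu> z + a m * ((\<mu>t m \<omega> z - \<mu> z) / a m)) \<in> borel_measurable PZ"
      using g \<mu>_meas by measurable
    moreover have "(\<lambda>z. \<mu> z + a m * ((\<mu>t m \<omega> z - \<mu> z) / a m)) = \<mu>t m \<omega>"
      proof -
      have "a m \<noteq> 0" using a_pos by (metis less_irrefl)
      then show ?thesis by (auto simp: fun_eq_iff)
    qed
    ultimately show ?thesis by simp
  qed
  have key: "\<bar>VaR PZ \<alpha> (\<mu>t m \<omega>) - VaR PZ \<alpha> \<mu>\<bar> \<le> c"
    if "m \<ge> N0" "\<omega> \<in> space M" "sup_norm PZ (\<lambda>z. \<mu>t m \<omega> z - \<mu> z) \<le> ereal c" for m \<omega> c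
  proof -
    have "AE z in PZ. ereal \<bar>\<mu>t m \<omega> z - \<mu> z\<bar> \<le> ereal c"
      using esssup_AE[of "\<lambda>z. ereal \<bar>\<mu>t m \<omega> z - \<mu> z\<bar>" PZ] that(3)
      unfolding sup_norm_def by (elim AE_mp) (intro AE_I2 impI, erule order_trans, assumption)
    then have ae: "AE z in PZ. \<bar>\<mu>t m \<omega> z - \<mu> z\<bar> \<le> c" by simp
    have 1: "VaR PZ \<alpha> (\<mu>t m \<omega>) \<le> VaR PZ \<alpha> \<mu> + c"
      by (rule P.quant_shift[OF meas[OF that(1,2)] \<mu>_meas \<alpha>]) (use ae in \<open>auto elim!: AE_mp\<close>)
    have 2: "VaR PZ \<alpha> \<mu> \<le> VaR PZ \<alpha> (\<mu>t m \<omega>) + c"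
      by (rule P.quant_shift[OF \<mu>_meas meas[OF that(1,2)] \<alpha>]) (use ae in \<open>auto elim!: AE_mp\<close>)
    show ?thesis using 1 2 by linarith
  qed
  show ?thesis unfolding bigOP_def
  proof (intro allI impI)
    fix \<epsilon> :: real assume "\<epsilon> > 0"
    then obtain K N where KN: "\<forall>m\<ge>N. \<exists>A\<in>sets M.
        {\<omega>\<in>space M. sup_norm PZ (\<lambda>z. \<mu>t m \<omega> z - \<mu> z) > ereal (K * a m)} \<subseteq> A \<and> measure M A < \<epsilon>"
      using rate_\<mu> unfolding bigOP_def by blast
    show "\<exists>K N. \<forall>m\<ge>N. \<exists>A\<in>sets M.
        {\<omega>\<in>space M. ereal \<bar>VaR PZ \<alpha> (\<mu>t m \<omega>) - VaR PZ \<alpha> \<mu>\<bar> > ereal (K * a m)} \<subseteq> A \<and> measure M A < \<epsilon>"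
    proof (intro exI allI impI)
      fix m assume m: "max N N0 \<le> m"
      then obtain A where A: "A \<in> sets M"
        "{\<omega>\<in>space M. sup_norm PZ (\<lambda>z. \<mu>t m \<omega> z - \<mu> z) > ereal (K * a m)} \<subseteq> A" "measure M A < \<epsilon>"
        using KN by auto
      have "{\<omega>\<in>space M. ereal \<bar>VaR PZ \<alpha> (\<mu>t m \<omega>) - VaR PZ \<alpha> \<mu>\<bar> > ereal (K * a m)}
          \<subseteq> {\<omega>\<in>space M. sup_norm PZ (\<lambda>z. \<mu>t m \<omega> z - \<mu> z) > ereal (K * a m)}"
      proof safe
        fix \<omega> assume w: "\<omega> \<in> space M" "ereal \<bar>VaR PZ \<alpha> (\<mu>t m \<omega>) - VaR PZ \<alpha> \<mu>\<bar> > ereal (K * a m)"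
        show "sup_norm PZ (\<lambda>z. \<mu>t m \<omega> z - \<mu> z) > ereal (K * a m)"
        proof (rule ccontr)
          assume "\<not> ?thesis"
          then have "sup_norm PZ (\<lambda>z. \<mu>t m \<omega> z - \<mu> z) \<le> ereal (K * a m)" by simp
          from key[OF _ w(1) this] m w(2) show False by simp
        qed
      qed
      then show "\<exists>A\<in>sets M. {\<omega>\<in>space M. ereal \<bar>VaR PZ \<alpha> (\<mu>t m \<omega>) - VaR PZ \<alpha> \<mu>\<bar> > ereal (K * a m)} \<subseteq> A \<and> measure M A < \<epsilon>"
        using A by blast
    qed
  qed
qed

end
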